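(* Let $N\in\mathbb{N}$ and let $F,G,H$ be positive-semidefinite $N\times N$ Hermitian matrices with $0\preceq H\preceq F$. Consider the semidefinite program \[ \min\ \operatorname{tr}[HX]\quad\text{s.t.}\quad \operatorname{tr}[FX]=1,\quad \operatorname{tr}[GX]=0,\quad X\succeq 0, \] over $N\times N$ Hermitian matrices $X$, and assume it is feasible. Then it is equivalent to the quadratic optimization problem \[ \min\ x^\dagger H x\quad\text{s.t.}\quad x^\dagger F x=1,\quad x\in\ker G,\quad x\perp(\ker F\cap\ker G), \] in the sense that both have the same optimal value and for every optimal $x$ of the quadratic problem, $X=xx^\dagger$ is optimal for the semidefinite program.
   Context: $A\preceq B$ means $B-A$ is positive-semidefinite. For a positive-semidefinite $G$, $x^\dagger Gx=0$ is equivalent to $x\in\ker G$. *)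

theory Defs
  imports "HOL-Analysis.Analysis"
begin

text \<open>N x N complex matrices are rendered as complex^'n^'n with 'n a finite type, CARD('n) = N.\<close>

definition conj_transpose :: "complex^'n^'n \<Rightarrow> complex^'n^'n" where
  "conj_transpose A = (\<chi> i j. cnj (A $ j $ i))"

definition hermitian_mat :: "complex^'n^'n \<Rightarrow> bool" where
  "hermitian_mat A \<longleftrightarrow> conj_transpose A = A"

definition qform :: "complex^'n^'n \<Rightarrow> complex^'n \<Rightarrow> complex" where
  "qform A x = (\<Sum>i\<in>UNIV. \<Sum>j\<in>UNIV. cnj (x $ i) * A $ i $ j * x $ j)"

definition psd :: "complex^'n^'n \<Rightarrow> bool" where
  "psd A \<longleftrightarrow> hermitian_mat A \<and> (\<forall>x. Im (qform A x) = 0 \<and> 0 \<le> Re (qform A x))"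

definition loewner_le :: "complex^'n^'n \<Rightarrow> complex^'n^'n \<Rightarrow> bool" where
  "loewner_le A B \<longleftrightarrow> psd (B - A)"

definition ker_mat :: "complex^'n^'n \<Rightarrow> (complex^'n) set" where
  "ker_mat A = {x. A *v x = 0}"

definition cinner :: "complex^'n \<Rightarrow> complex^'n \<Rightarrow> complex" where
  "cinner y x = (\<Sum>i\<in>UNIV. cnj (y $ i) * x $ i)"

definition outer :: "complex^'n \<Rightarrow> complex^'n^'n" where
  "outer x = (\<chi> i j. x $ i * cnj (x $ j))"

definition sdp_feasible :: "complex^'n^'n \<Rightarrow> complex^'n^'n \<Rightarrow> complex^'n^'n \<Rightarrow> bool" where
  "sdp_feasible F G X \<longleftrightarrow> psd X \<and> trace (F ** X) = 1 \<and> trace (G ** X) = 0"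

definition qp_feasible :: "complex^'n^'n \<Rightarrow> complex^'n^'n \<Rightarrow> complex^'n \<Rightarrow> bool" where
  "qp_feasible F G x \<longleftrightarrow> qform F x = 1 \<and> x \<in> ker_mat G \<and>
     (\<forall>y\<in>ker_mat F \<inter> ker_mat G. cinner y x = 0)"

definition sdp_value :: "complex^'n^'n \<Rightarrow> complex^'n^'n \<Rightarrow> complex^'n^'n \<Rightarrow> real" where
  "sdp_value H F G = Inf {Re (trace (H ** X)) | X. sdp_feasible F G X}"

definition qp_value :: "complex^'n^'n \<Rightarrow> complex^'n^'n \<Rightarrow> complex^'n^'n \<Rightarrow> real" where
  "qp_value H F G = Inf {Re (qform H x) | x. qp_feasible F G x}"

definition sdp_optimal :: "complex^'n^'n \<Rightarrow> complex^'n^'n \<Rightarrow> complex^'n^'n \<Rightarrow> complex^'n^'n \<Rightarrow> bool" where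
  "sdp_optimal H F G X \<longleftrightarrow> sdp_feasible F G X \<and>
     (\<forall>Y. sdp_feasible F G Y \<longrightarrow> Re (trace (H ** X)) \<le> Re (trace (H ** Y)))"

definition qp_optimal :: "complex^'n^'n \<Rightarrow> complex^'n^'n \<Rightarrow> complex^'n^'n \<Rightarrow> complex^'n \<Rightarrow> bool" where
  "qp_optimal H F G x \<longleftrightarrow> qp_feasible F G x \<and>
     (\<forall>y. qp_feasible F G y \<longrightarrow> Re (qform H x) \<le> Re (qform H y))"

end

theory Submission imports Defs begin

definition bf :: "complex^'n^'n \<Rightarrow> complex^'n \<Rightarrow> complex^'n \<Rightarrow> complex" where
  "bf A u v = (\<Sum>i\<in>UNIV. \<Sum>j\<in>UNIV. cnj (u $ i) * A $ i $ j * v $ j)"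

lemma qform_bf: "qform A x = bf A x x" by (simp add: qform_def bf_def)

lemma bf_add1: "bf A (u + v) w = bf A u w + bf A v w"
  by (simp add: bf_def sum.distrib[symmetric] algebra_simps)
lemma bf_add2: "bf A u (v + w) = bf A u v + bf A u w"
  by (simp add: bf_def sum.distrib[symmetric] algebra_simps)
lemma bf_smult1: "bf A (c *s u) w = cnj c * bf A u w"
  by (simp add: bf_def sum_distrib_left algebra_simps)
lemma bf_smult2: "bf A u (c *s w) = c * bf A u w"
  by (simp add: bf_def sum_distrib_left algebra_simps)
lemma bf_diffM: "bf (A - B) u w = bf A u w - bf B u w"
  by (simp add: bf_def sum_subtractf[symmetric] algebra_simps)
lemma bf_cinner: "bf A u v = cinner u (A *v v)"
  by (simp add: bf_def cinner_def matrix_vector_mult_def sum_distrib_left mult.assoc)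
lemma bf_herm: assumes "hermitian_mat A" shows "bf A v u = cnj (bf A u v)"
proof -
  have A: "cnj (A $ i $ j) = A $ j $ i" for i j
    using assms unfolding hermitian_mat_def conj_transpose_def
    by (metis vec_lambda_beta)
  have "bf A v u = (\<Sum>i\<in>UNIV. \<Sum>j\<in>UNIV. cnj (v $ i) * A $ i $ j * u $ j)" by (simp add: bf_def)
  also have "\<dots> = (\<Sum>j\<in>UNIV. \<Sum>i\<in>UNIV. cnj (v $ i) * A $ i $ j * u $ j)" by (rule sum.swap)
  also have "\<dots> = cnj (bf A u v)" unfolding bf_def cnj_sum complex_cnj_mult complex_cnj_cnj A
    by (simp only: mult_ac)
  finally show ?thesis .
qed

lemma psd_real: assumes "psd A" shows "qform A x = complex_of_real (Re (qform A x))"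
  using assms unfolding psd_def by (simp add: complex_eq_iff)

lemma cinner_self: "cinner z z = complex_of_real (\<Sum>i\<in>UNIV. (cmod (z$i))^2)"
  unfolding cinner_def of_real_sum of_real_power
  by (rule sum.cong) (auto simp: complex_norm_square[symmetric] mult.commute)

lemma cinner_self_zero: assumes "Re (cinner z z) \<le> 0" shows "z = 0"
proof -
  have "(\<Sum>i\<in>UNIV. (cmod (z$i))^2) \<le> 0" using assms cinner_self[of z] by simp
  hence "\<forall>i\<in>UNIV. (cmod (z$i))^2 = 0"
    by (metis (no_types, lifting) antisym finite sum_nonneg sum_nonneg_eq_0_iff zero_le_power2)
  thus ?thesis by (simp add: vec_eq_iff)
qed

lemma bf_expand: "bf A (x + c *s z) (x + c *s z) = bf A x x + c * bf A x z + cnj c * bf A z x + cnj c * c * bf A z z"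
  by (simp add: bf_add1 bf_add2 bf_smult1 bf_smult2 algebra_simps)

lemma psd_zero: assumes "psd A" "qform A x = 0" shows "A *v x = 0"
proof -
  define z where "z = A *v x"
  have h: "hermitian_mat A" using assms(1) by (simp add: psd_def)
  define n where "n = Re (cinner z z)"
  define m where "m = Re (qform A z)"
  have m0: "m \<ge> 0" using assms(1) by (simp add: psd_def m_def)
  have zx: "bf A z x = complex_of_real n" using cinner_self[of z] by (simp add: bf_cinner z_def n_def)
  have xz: "bf A x z = complex_of_real n" using bf_herm[OF h, of x z] unfolding zx by simp
  have zz: "bf A z z = complex_of_real m" using psd_real[OF assms(1), of z] by (simp add: qform_bf m_def)
  have key: "0 \<le> - 2 * t * n + t * t * m" for t :: real
  proof -
    have "0 \<le> Re (qform A (x + complex_of_real (-t) *s z))" using assms(1) by (simp add: psd_def)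
    also have "\<dots> = - 2 * t * n + t * t * m"
      unfolding qform_bf bf_expand zx xz zz using assms(2) by (simp add: qform_bf)
    finally show ?thesis .
  qed
  have "n \<le> 0"
  proof (rule ccontr)
    assume "\<not> n \<le> 0"
    hence n: "n > 0" by simp
    show False
    proof (cases "m = 0")
      case True then show ?thesis using key[of 1] n by simp
    next
      case False
      hence mp: "m > 0" using m0 by simp
      have "0 \<le> - 2 * (n/m) * n + (n/m) * (n/m) * m" by (rule key)
      also have "\<dots> = - (n * n / m)" using mp by (simp add: field_simps)
      finally have "n * n / m \<le> 0" by simp
      moreover have "n * n / m > 0" using n mp by simp
      ultimately show False by simp
    qed
  qed
  thus ?thesis using cinner_self_zero[of z] by (simp add: z_def n_def)
qed

lemma cs: assumes "psd A"
  shows "(cmod (bf A u v))^2 \<le> Re (qform A u) * Re (qform A v)"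
proof -
  have h: "hermitian_mat A" using assms(1) by (simp add: psd_def)
  define a where "a = Re (qform A v)"
  define b where "b = Re (qform A u)"
  define c where "c = bf A u v"
  have a0: "a \<ge> 0" using assms by (simp add: psd_def a_def)
  have vv: "bf A v v = complex_of_real a" using psd_real[OF assms, of v] by (simp add: qform_bf a_def)
  have uu: "bf A u u = complex_of_real b" using psd_real[OF assms, of u] by (simp add: qform_bf b_def)
  have vu: "bf A v u = cnj c" using bf_herm[OF h, of u v] by (simp add: c_def)
  show ?thesis
  proof (cases "a = 0")
    case True
    hence "A *v v = 0" using psd_zero[OF assms, of v] vv by (simp add: qform_bf)
    hence "c = 0" by (simp add: c_def bf_cinner cinner_def)
    thus ?thesis using True by (simp add: c_def a_def)
  next
    case False
    hence ap: "a > 0" using a0 by simp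
    define d where "d = - cnj c"
    define w where "w = complex_of_real a *s u + d *s v"
    have cc: "c * cnj c = complex_of_real (cmod c) * complex_of_real (cmod c)"
      by (metis complex_norm_square of_real_mult power2_eq_square)
    have "0 \<le> Re (qform A w)" using assms by (simp add: psd_def)
    also have "Re (qform A w) = a * (a * b - (cmod c)^2)"
    proof -
      have "qform A w = cnj (complex_of_real a) * complex_of_real a * bf A u u
          + cnj (complex_of_real a) * d * bf A u v
          + cnj d * complex_of_real a * bf A v u
          + cnj d * d * bf A v v"
        unfolding qform_bf w_def bf_add1 bf_add2 bf_smult1 bf_smult2 by (simp add: algebra_simps)
      also have "\<dots> = complex_of_real (a * (a * b - (cmod c)^2))"
        unfolding uu vv vu c_def[symmetric] d_def using cc
        by (simp add: algebra_simps power2_eq_square)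
      finally show ?thesis by simp
    qed
    finally have "0 \<le> a * (a * b - (cmod c)^2)" .
    hence "(cmod c)^2 \<le> a * b" using ap by (simp add: zero_le_mult_iff)
    thus ?thesis by (simp add: c_def a_def b_def mult.commute)
  qed
qed

definition ev :: "'n \<Rightarrow> complex^'n" where "ev i = (\<chi> k. if k = i then 1 else 0)"

lemma sum_ev_r: fixes i :: "'n::finite" shows "(\<Sum>j\<in>UNIV. f j * (if j = i then 1 else 0)) = (f i::complex)"
proof -
  have "(\<Sum>j\<in>UNIV. f j * (if j = i then 1 else 0)) = (\<Sum>j\<in>UNIV. if j = i then f j else 0)"
    by (rule sum.cong) auto
  also have "\<dots> = f i" by (simp add: sum.delta)
  finally show ?thesis .
qed

lemma sum_ev_l: fixes i :: "'n::finite" shows "(\<Sum>j\<in>UNIV. cnj (if j = i then 1 else 0) * f j) = (f i::complex)"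
proof -
  have "(\<Sum>j\<in>UNIV. cnj (if j = i then 1 else 0) * f j) = (\<Sum>j\<in>UNIV. if j = i then f j else 0)"
    by (rule sum.cong) auto
  also have "\<dots> = f i" by (simp add: sum.delta)
  finally show ?thesis .
qed

lemma qform_ev: "qform A (ev i) = A $ i $ i"
  unfolding qform_def ev_def vec_lambda_beta
  by (simp only: sum_ev_r sum_distrib_left[symmetric] mult.assoc sum_ev_l)

lemma mv_ev: "(A *v ev i) $ k = A $ k $ i"
  unfolding matrix_vector_mult_def ev_def vec_lambda_beta by (simp only: sum_ev_r)

lemma herm_iff: "hermitian_mat A \<longleftrightarrow> (\<forall>i j. cnj (A $ j $ i) = A $ i $ j)"
  by (simp add: hermitian_mat_def conj_transpose_def vec_eq_iff)

lemma herm_real: assumes "hermitian_mat A" shows "Im (qform A x) = 0"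
proof -
  have "qform A x = cnj (qform A x)" using bf_herm[OF assms, of x x] by (simp add: qform_bf)
  thus ?thesis by (metis cnj.simps(2) neg_equal_zero)
qed

lemma psdI: assumes "hermitian_mat A" "\<And>x. 0 \<le> Re (qform A x)" shows "psd A"
  using assms herm_real unfolding psd_def by blast

lemma psd_diag_zero_col: assumes "psd A" "A $ i $ i = 0" shows "A $ k $ i = 0" "A $ i $ k = 0"
proof -
  have "A *v ev i = 0" using psd_zero[OF assms(1)] assms(2) by (simp add: qform_ev)
  thus c: "A $ k $ i = 0" using mv_ev[of A i k] by simp
  have "hermitian_mat A" using assms(1) by (simp add: psd_def)
  thus "A $ i $ k = 0" using c herm_iff by (metis complex_cnj_zero)
qed

lemma qform_outer: "qform (outer b) x = cinner x b * cnj (cinner x b)"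
  unfolding qform_def outer_def cinner_def vec_lambda_beta cnj_sum complex_cnj_mult complex_cnj_cnj sum_product
  by (simp only: mult_ac)

lemma herm_outer: "hermitian_mat (outer b)"
  by (simp add: herm_iff outer_def)

lemma qform_diffM: "qform (A - B) x = qform A x - qform B x"
  by (simp add: qform_bf bf_diffM)

lemma herm_diff: "hermitian_mat A \<Longrightarrow> hermitian_mat B \<Longrightarrow> hermitian_mat (A - B)"
  by (simp add: herm_iff)

lemma outer_zero: "outer 0 = 0"
  by (simp add: outer_def vec_eq_iff)

lemma chol_step:
  assumes "psd R" and r: "R $ j $ j = complex_of_real r" "r > 0"
  defines "c \<equiv> (\<chi> i. R $ i $ j / complex_of_real (sqrt r))"
  shows "psd (R - outer c)" "(R - outer c) $ j $ j = 0"
    "\<And>i. R $ i $ i = 0 \<Longrightarrow> (R - outer c) $ i $ i = 0"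
proof -
  have h: "hermitian_mat R" using assms(1) by (simp add: psd_def)
  have bfe: "bf R x (ev j) = (\<Sum>i\<in>UNIV. cnj (x $ i) * R $ i $ j)" for x
    unfolding bf_def ev_def vec_lambda_beta by (simp only: sum_ev_r)
  have ci: "cinner x c = bf R x (ev j) / complex_of_real (sqrt r)" for x
    unfolding bfe by (simp add: cinner_def c_def sum_divide_distrib)
  show "psd (R - outer c)"
  proof (rule psdI)
    show "hermitian_mat (R - outer c)" using h herm_outer herm_diff by blast
    fix x
    have cs1: "(cmod (bf R x (ev j)))^2 \<le> Re (qform R x) * r"
      using cs[OF assms(1), of x "ev j"] r by (simp add: qform_ev)
    have "Re (qform (outer c) x) = (cmod (cinner x c))^2"
      unfolding qform_outer by (metis Re_complex_of_real complex_norm_square mult.commute)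
    also have "\<dots> = (cmod (bf R x (ev j)))^2 / r"
      using r(2) by (simp add: ci norm_divide power_divide)
    also have "\<dots> \<le> Re (qform R x)" using cs1 r(2) by (simp add: divide_le_eq)
    finally show "0 \<le> Re (qform (R - outer c) x)" by (simp add: qform_diffM)
  qed
  have sq: "complex_of_real (sqrt r) * complex_of_real (sqrt r) = complex_of_real r"
  proof -
    have "sqrt r * sqrt r = r" using r(2) by simp
    thus ?thesis by (metis of_real_mult)
  qed
  have cj: "c $ j = complex_of_real (sqrt r)"
  proof -
    have "c $ j = complex_of_real (r / sqrt r)" unfolding c_def vec_lambda_beta r(1) of_real_divide ..
    also have "r / sqrt r = sqrt r" using r(2) by (simp add: real_div_sqrt)
    finally show ?thesis .
  qed
  show "(R - outer c) $ j $ j = 0"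
    using r sq cj by (simp add: outer_def)
  show "(R - outer c) $ i $ i = 0" if "R $ i $ i = 0" for i
  proof -
    have "R $ i $ j = 0" using psd_diag_zero_col[OF assms(1) that] by simp
    thus ?thesis using that by (simp add: outer_def c_def)
  qed
qed

lemma decomp_aux:
  fixes X :: "complex^'n^'n"
  assumes "psd X" "finite S"
  shows "\<exists>b R. X = (\<Sum>k\<in>S. outer (b k)) + R \<and> psd R \<and> (\<forall>i\<in>S. R $ i $ i = 0)"
  using assms(2)
proof (induction S rule: finite_induct)
  case empty
  show ?case using assms(1) by (intro exI[of _ "\<lambda>_. 0"] exI[of _ X]) simp
next
  case (insert j S)
  then obtain b R where X: "X = (\<Sum>k\<in>S. outer (b k)) + R" and R: "psd R" and Z: "\<forall>i\<in>S. R $ i $ i = 0"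
    by blast
  show ?case
  proof (cases "R $ j $ j = 0")
    case True
    define b' where "b' = b(j := 0)"
    have "(\<Sum>k\<in>insert j S. outer (b' k)) = outer (b' j) + (\<Sum>k\<in>S. outer (b' k))"
      using insert by (simp add: sum.insert)
    also have "(\<Sum>k\<in>S. outer (b' k)) = (\<Sum>k\<in>S. outer (b k))"
      using insert(2) by (intro sum.cong) (auto simp: b'_def)
    finally have "X = (\<Sum>k\<in>insert j S. outer (b' k)) + R" using X by (simp add: b'_def outer_zero)
    thus ?thesis using R Z True by blast
  next
    case False
    define r where "r = Re (R $ j $ j)"
    have Rjj: "R $ j $ j = complex_of_real r" using psd_real[OF R, of "ev j"] by (simp add: qform_ev r_def)
    have "r \<ge> 0" using R unfolding psd_def by (metis qform_ev r_def)
    hence rp: "r > 0" using False Rjj by (cases "r = 0") auto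
    define c where "c = (\<chi> i. R $ i $ j / complex_of_real (sqrt r))"
    note st = chol_step[OF R Rjj rp, folded c_def]
    define b' where "b' = b(j := c)"
    have "(\<Sum>k\<in>insert j S. outer (b' k)) = outer (b' j) + (\<Sum>k\<in>S. outer (b' k))"
      using insert by (simp add: sum.insert)
    also have "(\<Sum>k\<in>S. outer (b' k)) = (\<Sum>k\<in>S. outer (b k))"
      using insert(2) by (intro sum.cong) (auto simp: b'_def)
    finally have "X = (\<Sum>k\<in>insert j S. outer (b' k)) + (R - outer c)" using X by (simp add: b'_def)
    moreover have "\<forall>i\<in>insert j S. (R - outer c) $ i $ i = 0" using st(2,3) Z by auto
    ultimately show ?thesis using st(1) by blast
  qed
qed

lemma decomp:
  fixes X :: "complex^'n^'n"
  assumes "psd X"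
  shows "\<exists>b::'n \<Rightarrow> complex^'n. X = (\<Sum>k\<in>UNIV. outer (b k))"
proof -
  obtain b :: "'n \<Rightarrow> complex^'n" and R where XRZ: "X = (\<Sum>k\<in>UNIV. outer (b k)) + R \<and> psd R \<and> (\<forall>i\<in>UNIV. R $ i $ i = 0)"
    using decomp_aux[OF assms finite[of UNIV]] by (elim exE) assumption
  hence X: "X = (\<Sum>k\<in>UNIV. outer (b k)) + R" and R: "psd R" and Z: "\<forall>i. R $ i $ i = 0" by simp_all
  have "R = 0" using psd_diag_zero_col[OF R] Z by (simp add: vec_eq_iff)
  thus ?thesis using X by auto
qed

lemma trace_outer: "trace (A ** outer b) = qform A b"
  unfolding trace_def matrix_matrix_mult_def outer_def qform_def vec_lambda_beta
  by (simp only: mult_ac)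

lemma trace_sum: fixes A :: "complex^'n^'n" shows "trace (A ** (\<Sum>k\<in>S. f k)) = (\<Sum>k\<in>S. trace (A ** f k))"
proof (induction S rule: infinite_finite_induct)
  case (infinite S) thus ?case by (simp add: trace_def matrix_matrix_mult_def)
next
  case empty thus ?case by (simp add: trace_def matrix_matrix_mult_def)
next
  case (insert x F) thus ?case by (simp add: matrix_add_ldistrib trace_add)
qed

lemma mv_smult: "A *v (c *s x) = c *s (A *v (x::complex^'n))"
  by (simp add: vec_eq_iff matrix_vector_mult_def sum_distrib_left mult_ac)

lemma mv_scaleR: "A *v (r *\<^sub>R x) = r *\<^sub>R (A *v (x::complex^'n))"
  by (simp add: vec_eq_iff matrix_vector_mult_def scaleR_sum_right)

lemma cinner_smult2: "cinner k (c *s x) = c * cinner k x"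
  by (simp add: cinner_def sum_distrib_left mult_ac)

lemma cinner_smult1: "cinner (c *s k) x = cnj c * cinner k x"
  by (simp add: cinner_def sum_distrib_left mult_ac)

lemma Re_cinner: "Re (cinner x y) = inner x y"
  by (simp add: cinner_def inner_vec_def inner_complex_def Re_sum)

lemma qform_smult: "qform A (c *s x) = cnj c * c * qform A x"
  by (simp add: qform_bf bf_smult1 bf_smult2)

lemma qform_kill: assumes "hermitian_mat A" "A *v q = 0" shows "qform A (q + p) = qform A p"
proof -
  have 1: "bf A q q = 0" "bf A p q = 0" using assms(2) by (simp_all add: bf_cinner cinner_def)
  have 2: "bf A q p = 0" using bf_herm[OF assms(1), of q p] 1 by simp
  show ?thesis by (simp add: qform_bf bf_add1 bf_add2 1 2)
qed

lemma proj:
  fixes F G H :: "complex^'n^'n"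
  assumes F: "psd F" and H: "psd H" and HF: "loewner_le H F"
    and Gv: "G *v v = 0" and fp: "Re (qform F v) > 0"
  shows "\<exists>y. qp_feasible F G y \<and> Re (qform H y) * Re (qform F v) = Re (qform H v)"
proof -
  define K where "K = {x. F *v x = 0 \<and> G *v x = 0}"
  have sK: "subspace K"
    unfolding subspace_def K_def by (auto simp: matrix_vector_right_distrib mv_scaleR)
  obtain q p where q: "q \<in> span K" and p: "\<And>w. w \<in> span K \<Longrightarrow> orthogonal p w" and v: "v = q + p"
    using orthogonal_subspace_decomp_exists[of K v] by blast
  have qK: "q \<in> K" using q sK by (metis span_eq_iff)
  have Fq: "F *v q = 0" and Gq: "G *v q = 0" using qK by (auto simp: K_def)
  have hF: "hermitian_mat F" and hH: "hermitian_mat H" using F H by (simp_all add: psd_def)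
  have Hq: "H *v q = 0"
  proof -
    have "0 \<le> Re (qform (F - H) q)" using HF by (simp add: loewner_le_def psd_def)
    moreover have "qform F q = 0" using Fq by (simp add: qform_bf bf_cinner cinner_def)
    moreover have "0 \<le> Re (qform H q)" using H by (simp add: psd_def)
    ultimately have "Re (qform H q) = 0" by (simp add: qform_diffM)
    hence "qform H q = 0" using psd_real[OF H, of q] by simp
    thus ?thesis using psd_zero[OF H] by simp
  qed
  have Fp: "qform F p = qform F v" using qform_kill[OF hF Fq] v by simp
  have Hp: "qform H p = qform H v" using qform_kill[OF hH Hq] v by simp
  have Gp: "G *v p = 0" using Gv Gq v by (simp add: matrix_vector_right_distrib)
  have orth: "cinner k p = 0" if "k \<in> K" for k
  proof -
    have ik: "\<i> *s k \<in> K" using that by (simp add: K_def mv_smult)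
    have "inner p k = 0" "inner p (\<i> *s k) = 0" using p[OF span_base[OF that]] p[OF span_base[OF ik]] by (simp_all add: orthogonal_def)
    hence "Re (cinner k p) = 0" "Re (cinner (\<i> *s k) p) = 0" by (simp_all add: Re_cinner inner_commute)
    thus ?thesis by (simp add: cinner_smult1 complex_eq_iff)
  qed
  define f where "f = Re (qform F v)"
  have fv: "qform F v = complex_of_real f" using psd_real[OF F, of v] by (simp add: f_def)
  define s where "s = complex_of_real (1 / sqrt f)"
  have ss: "cnj s * s = complex_of_real (1 / f)"
    using fp by (simp add: s_def f_def flip: of_real_mult)
  define y where "y = s *s p"
  have "qform F y = 1" using fp unfolding y_def qform_smult ss Fp fv by (simp add: f_def flip: of_real_mult)
  moreover have "y \<in> ker_mat G" using Gp by (simp add: y_def ker_mat_def mv_smult)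
  moreover have "\<forall>k\<in>ker_mat F \<inter> ker_mat G. cinner k y = 0"
    using orth by (simp add: y_def cinner_smult2 ker_mat_def K_def)
  moreover have "Re (qform H y) * f = Re (qform H v)"
    using fp unfolding y_def qform_smult ss Hp by (simp add: f_def)
  ultimately show ?thesis unfolding qp_feasible_def f_def by blast
qed

lemma key:
  fixes F G H X :: "complex^'n^'n"
  assumes F: "psd F" and G: "psd G" and H: "psd H" and HF: "loewner_le H F"
    and X: "sdp_feasible F G X"
  shows "\<exists>y. qp_feasible F G y \<and> Re (qform H y) \<le> Re (trace (H ** X))"
proof (rule ccontr)
  assume nex: "\<not> ?thesis"
  have pX: "psd X" using X by (simp add: sdp_feasible_def)
  obtain b :: "'n \<Rightarrow> complex^'n" where Xb: "X = (\<Sum>k\<in>UNIV. outer (b k))" using decomp[OF pX] by blast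
  have tr: "trace (A ** X) = (\<Sum>k\<in>UNIV. qform A (b k))" for A by (simp add: Xb trace_sum trace_outer)
  have Gb: "G *v b k = 0" for k
  proof -
    have "(\<Sum>k\<in>UNIV. qform G (b k)) = 0" using X tr[of G] by (simp add: sdp_feasible_def)
    hence "(\<Sum>k\<in>UNIV. Re (qform G (b k))) = 0" by (metis Re_sum zero_complex.simps(1))
    moreover have "\<forall>k\<in>UNIV. 0 \<le> Re (qform G (b k))" using G by (simp add: psd_def)
    ultimately have "Re (qform G (b k)) = 0" using sum_nonneg_eq_0_iff[of UNIV "\<lambda>k. Re (qform G (b k))"] by simp
    hence "qform G (b k) = 0" using psd_real[OF G, of "b k"] by simp
    thus ?thesis using psd_zero[OF G] by simp
  qed
  define f where "f k = Re (qform F (b k))" for k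
  define h where "h k = Re (qform H (b k))" for k
  define t where "t = Re (trace (H ** X))"
  have f0: "f k \<ge> 0" for k using F by (simp add: psd_def f_def)
  have h0: "h k \<ge> 0" for k using H by (simp add: psd_def h_def)
  have sf: "(\<Sum>k\<in>UNIV. f k) = 1" using X tr[of F] by (simp add: sdp_feasible_def f_def flip: Re_sum)
  have sh: "(\<Sum>k\<in>UNIV. h k) = t" using tr[of H] by (simp add: t_def h_def flip: Re_sum)
  have gt: "t < Re (qform H y)" if "qp_feasible F G y" for y using nex that by (auto simp: t_def not_le)
  have le: "t * f k \<le> h k" for k
  proof (cases "f k = 0")
    case True thus ?thesis using h0[of k] by simp
  next
    case False
    hence fp: "f k > 0" using f0[of k] by simp
    obtain y where y: "qp_feasible F G y" "Re (qform H y) * f k = h k"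
      using proj[OF F H HF Gb fp[unfolded f_def]] by (auto simp: f_def h_def)
    have "t * f k \<le> Re (qform H y) * f k" using gt[OF y(1)] fp by simp
    thus ?thesis using y(2) by simp
  qed
  obtain k0 where k0: "f k0 > 0"
  proof (rule ccontr)
    assume "\<not> thesis"
    hence "\<forall>k. f k \<le> 0" using that by (meson not_le)
    hence "(\<Sum>k\<in>UNIV. f k) \<le> 0" by (simp add: sum_nonpos)
    thus False using sf by simp
  qed
  have lt: "t * f k0 < h k0"
  proof -
    obtain y where y: "qp_feasible F G y" "Re (qform H y) * f k0 = h k0"
      using proj[OF F H HF Gb k0[unfolded f_def]] by (auto simp: f_def h_def)
    have "t * f k0 < Re (qform H y) * f k0" using gt[OF y(1)] k0 by simp
    thus ?thesis using y(2) by simp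
  qed
  have "(\<Sum>k\<in>UNIV. t * f k) < (\<Sum>k\<in>UNIV. h k)"
    by (rule sum_strict_mono_ex1) (use le lt in auto)
  thus False using sf sh by (simp flip: sum_distrib_left)
qed

lemma outer_feasible:
  fixes F G H :: "complex^'n^'n"
  assumes "qp_feasible F G x"
  shows "sdp_feasible F G (outer x)" "trace (H ** outer x) = qform H x"
proof -
  show "trace (H ** outer x) = qform H x" by (rule trace_outer)
  have "psd (outer x)"
  proof (rule psdI)
    show "hermitian_mat (outer x)" by (rule herm_outer)
    fix y
    have "cinner y x * cnj (cinner y x) = complex_of_real ((cmod (cinner y x))^2)"
      by (rule complex_norm_square[symmetric])
    thus "0 \<le> Re (qform (outer x) y)" unfolding qform_outer by simp
  qed
  moreover have "trace (F ** outer x) = 1" using assms by (simp add: trace_outer qp_feasible_def)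
  moreover have "trace (G ** outer x) = 0" using assms
    by (simp add: trace_outer qp_feasible_def ker_mat_def qform_bf bf_cinner cinner_def)
  ultimately show "sdp_feasible F G (outer x)" by (simp add: sdp_feasible_def)
qed

theorem proposition1:
  fixes F G H :: "complex^'n^'n"
  assumes "psd F" and "psd G" and "psd H"
    and "loewner_le 0 H" and "loewner_le H F"
    and "\<exists>X. sdp_feasible F G X"
  shows "sdp_value H F G = qp_value H F G
    \<and> (\<forall>x. qp_optimal H F G x \<longrightarrow> sdp_optimal H F G (outer x))"
proof
  define S where "S = {Re (trace (H ** X)) | X. sdp_feasible F G X}"
  define Q where "Q = {Re (qform H x) | x. qp_feasible F G x}"
  have QS: "Q \<subseteq> S"
  proof
    fix v assume "v \<in> Q"
    then obtain x where x: "v = Re (qform H x)" "qp_feasible F G x" unfolding Q_def by blast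
    have "sdp_feasible F G (outer x)" "Re (trace (H ** outer x)) = v"
      using outer_feasible(1)[OF x(2)] trace_outer[of H x] x(1) by simp_all
    thus "v \<in> S" unfolding S_def by blast
  qed
  have SQ: "\<exists>q\<in>Q. q \<le> s" if sS: "s \<in> S" for s
  proof -
    obtain X where X: "s = Re (trace (H ** X))" "sdp_feasible F G X" using sS unfolding S_def by blast
    obtain y where y: "qp_feasible F G y" "Re (qform H y) \<le> Re (trace (H ** X))"
      using key[OF assms(1,2,3,5) X(2)] by blast
    have "Re (qform H y) \<in> Q" unfolding Q_def using y(1) by blast
    thus ?thesis using y(2) X(1) by blast
  qed
  have Q0: "\<forall>q\<in>Q. 0 \<le> q" unfolding Q_def using assms(3) by (auto simp: psd_def)
  have S0: "\<forall>s\<in>S. 0 \<le> s" using SQ Q0 by force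
  obtain X where "sdp_feasible F G X" using assms(6) by blast
  hence Sne: "S \<noteq> {}" unfolding S_def by blast
  hence Qne: "Q \<noteq> {}" using SQ by blast
  have bQ: "bdd_below Q" using Q0 by (meson bdd_below.I)
  have bS: "bdd_below S" using S0 by (meson bdd_below.I)
  have "Inf S \<le> Inf Q" by (rule cInf_superset_mono[OF Qne bS QS])
  moreover have "Inf Q \<le> Inf S"
  proof (rule cInf_greatest[OF Sne])
    fix s assume "s \<in> S"
    then obtain q where "q \<in> Q" "q \<le> s" using SQ by blast
    thus "Inf Q \<le> s" using cInf_lower[OF _ bQ] by force
  qed
  ultimately show "sdp_value H F G = qp_value H F G"
    unfolding sdp_value_def qp_value_def S_def[symmetric] Q_def[symmetric] by simp
  show "\<forall>x. qp_optimal H F G x \<longrightarrow> sdp_optimal H F G (outer x)"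
  proof (intro allI impI)
    fix x assume opt: "qp_optimal H F G x"
    hence xf: "qp_feasible F G x" by (simp add: qp_optimal_def)
    have "Re (trace (H ** outer x)) \<le> Re (trace (H ** Y))" if Yf: "sdp_feasible F G Y" for Y
    proof -
      obtain y where y: "qp_feasible F G y" "Re (qform H y) \<le> Re (trace (H ** Y))"
        using key[OF assms(1,2,3,5) Yf] by blast
      have "Re (qform H x) \<le> Re (qform H y)" using opt y(1) by (simp add: qp_optimal_def)
      thus ?thesis using y(2) trace_outer[of H x] by simp
    qed
    thus "sdp_optimal H F G (outer x)" using outer_feasible(1)[OF xf] by (simp add: sdp_optimal_def)
  qed
qed

end
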